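(* Let $n\ge 1$ and let $\gamma: S^n\to\mathbb{R}_+$ be a continuous function. Then the Wulff shape $\mathcal{W}_\gamma\subset\mathbb{R}^{n+1}$ is self-dual, i.e. $\mathcal{W}_\gamma=\mathcal{DW}_\gamma$, if and only if the spherical convex body $\alpha_N^{-1}\circ Id(\mathcal{W}_\gamma)\subset S^{n+1}$ induced by $\mathcal{W}_\gamma$ is of constant width $\pi/2$.
   Context: $S^n$ is the unit sphere in $\mathbb{R}^{n+1}$, $\mathbb{R}_+$ the positive reals, and $x\cdot y$ the standard scalar product. For continuous $\gamma:S^n\to\mathbb{R}_+$, the Wulff shape is $\mathcal{W}_\gamma=\bigcap_{\theta\in S^n}\{x\in\mathbb{R}^{n+1}: x\cdot\theta\le\gamma(\theta)\}$; it is a convex body containing the origin in its interior. For each $\theta\in S^n$ the ray $\{r\theta: r>0\}$ meets $\partial\mathcal{W}_\gamma$ in exactly one point $w(\theta)\theta$ with $w(\theta)>0$. The dual Wulff shape is $\mathcal{DW}_\gamma=\mathcal{W}_{\overline{\gamma}}$ where $\overline{\gamma}(\theta)=1/w(-\theta)$; $\mathcal{W}_\gamma$ is self-dual if $\mathcal{W}_\gamma=\mathcal{DW}_\gamma$. On $S^{n+1}\subset\mathbb{R}^{n+2}$: for $P\in S^{n+1}$, $H(P)=\{Q\in S^{n+1}: P\cdot Q\ge 0\}$. A subset $\widetilde W\subset S^{n+1}$ is hemispherical if there is $P$ with $\widetilde W\cap H(P)=\emptyset$. For $P,Q\in S^{n+1}$, $P\neq -Q$, the arc $PQ=\{((1-t)P+tQ)/\|(1-t)P+tQ\|: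 t\in[0,1]\}$ and $|PQ|=\arccos(P\cdot Q)$ is its length. A hemispherical set is spherical convex if it contains the arc $PQ$ whenever it contains $P,Q$; a spherical convex body is a closed, spherical convex, hemispherical set with nonempty interior. $H(P)$ supports $\widetilde W$ if $\widetilde W\subset H(P)$ and $\partial\widetilde W\cap\partial H(P)\neq\emptyset$. For $P\neq\pm Q$, $H(P)\cap H(Q)$ is a lune with thickness $\Delta(H(P)\cap H(Q))=\pi-|PQ|$. For $H(P)$ supporting $\widetilde W$, $\mathrm{width}_{H(P)}\widetilde W$ is the minimum of $\Delta(H(P)\cap H(Q))$ over all $H(Q)$ supporting $\widetilde W$ with $\widetilde W\subset H(P)\cap H(Q)$. For $0<\rho<\pi$, $\widetilde W$ is of constant width $\rho$ if $\mathrm{width}_{H(P)}\widetilde W=\rho$ for every hemisphere $H(P)$ supporting $\widetilde W$. $N=(0,\dots,0,1)\in S^{n+1}$, $Id:\mathbb{R}^{n+1}\to\mathbb{R}^{n+1}\times\{1\}$, $Id(x)=(x,1)$, and $\alpha_N:\{P\in S^{n+1}: P_{n+2}>0\}\to\mathbb{R}^{n+1}\times\{1\}$ is the central projection $\alpha_N(P_1,\dots,P_{n+2})=(P_1/P_{n+2},\dots,P_{n+1}/P_{n+2},1)$. The spherical convex body induced by a Wulff shape $W$ is $\alpha_N^{-1}\circ Id(W)$. *)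

theory Defs
  imports "HOL-Analysis.Analysis"
begin

text \<open>R^{n+1} is modelled by an arbitrary euclidean space 'a (DIM('a) = n+1),
  and R^{n+2} by 'a \<times> real, whose last coordinate is the real component.\<close>

definition Wulff :: "('a::euclidean_space \<Rightarrow> real) \<Rightarrow> 'a set" where
  "Wulff \<gamma> = (\<Inter>\<theta>\<in>sphere 0 1. {x. x \<bullet> \<theta> \<le> \<gamma> \<theta>})"

definition radial :: "('a::euclidean_space \<Rightarrow> real) \<Rightarrow> 'a \<Rightarrow> real" where
  "radial \<gamma> \<theta> = (THE r. r > 0 \<and> r *\<^sub>R \<theta> \<in> frontier (Wulff \<gamma>))"

definition dual_gamma :: "('a::euclidean_space \<Rightarrow> real) \<Rightarrow> 'a \<Rightarrow> real" where
  "dual_gamma \<gamma> \<theta> = 1 / radial \<gamma> (- \<theta>)"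

definition dual_Wulff :: "('a::euclidean_space \<Rightarrow> real) \<Rightarrow> 'a set" where
  "dual_Wulff \<gamma> = Wulff (dual_gamma \<gamma>)"

definition self_dual :: "('a::euclidean_space \<Rightarrow> real) \<Rightarrow> bool" where
  "self_dual \<gamma> \<longleftrightarrow> Wulff \<gamma> = dual_Wulff \<gamma>"

abbreviation S1 :: "('a::euclidean_space \<times> real) set" where
  "S1 \<equiv> sphere 0 1"

definition hemi :: "'a::euclidean_space \<times> real \<Rightarrow> ('a \<times> real) set" where
  "hemi P = {Q \<in> S1. P \<bullet> Q \<ge> 0}"

definition hemispherical :: "('a::euclidean_space \<times> real) set \<Rightarrow> bool" where
  "hemispherical W \<longleftrightarrow> W \<subseteq> S1 \<and> (\<exists>P\<in>S1. W \<inter> hemi P = {})"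

definition sph_arc :: "'a::euclidean_space \<times> real \<Rightarrow> 'a \<times> real \<Rightarrow> ('a \<times> real) set" where
  "sph_arc P Q = {((1 - t) *\<^sub>R P + t *\<^sub>R Q) /\<^sub>R norm ((1 - t) *\<^sub>R P + t *\<^sub>R Q) | t. t \<in> {0..1}}"

definition arc_length :: "'a::euclidean_space \<times> real \<Rightarrow> 'a \<times> real \<Rightarrow> real" where
  "arc_length P Q = arccos (P \<bullet> Q)"

definition spherical_convex :: "('a::euclidean_space \<times> real) set \<Rightarrow> bool" where
  "spherical_convex W \<longleftrightarrow> hemispherical W \<and> (\<forall>P\<in>W. \<forall>Q\<in>W. sph_arc P Q \<subseteq> W)"

definition spherical_convex_body :: "('a::euclidean_space \<times> real) set \<Rightarrow> bool" where
  "spherical_convex_body W \<longleftrightarrow>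
     closedin (top_of_set S1) W \<and> spherical_convex W \<and> hemispherical W \<and>
     (top_of_set S1) interior_of W \<noteq> {}"

definition supports :: "'a::euclidean_space \<times> real \<Rightarrow> ('a \<times> real) set \<Rightarrow> bool" where
  "supports P W \<longleftrightarrow> W \<subseteq> hemi P \<and>
     ((top_of_set S1) frontier_of W) \<inter> ((top_of_set S1) frontier_of (hemi P)) \<noteq> {}"

text \<open>thickness of the lune H(P) \<inter> H(Q), P \<noteq> \<plusminus>Q\<close>
definition lune_thickness :: "'a::euclidean_space \<times> real \<Rightarrow> 'a \<times> real \<Rightarrow> real" where
  "lune_thickness P Q = pi - arc_length P Q"

definition sph_width :: "('a::euclidean_space \<times> real) set \<Rightarrow> 'a \<times> real \<Rightarrow> real" where
  "sph_width W P = Inf {lune_thickness P Q | Q. Q \<in> S1 \<and> Q \<noteq> P \<and> Q \<noteq> - P \<and>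
                         supports Q W \<and> W \<subseteq> hemi P \<inter> hemi Q}"

definition constant_width :: "('a::euclidean_space \<times> real) set \<Rightarrow> real \<Rightarrow> bool" where
  "constant_width W \<rho> \<longleftrightarrow> (\<forall>P\<in>S1. supports P W \<longrightarrow> sph_width W P = \<rho>)"

definition Id_lift :: "'a::euclidean_space \<Rightarrow> 'a \<times> real" where
  "Id_lift x = (x, 1)"

definition alpha_N :: "'a::euclidean_space \<times> real \<Rightarrow> 'a \<times> real" where
  "alpha_N P = (fst P /\<^sub>R snd P, 1)"

text \<open>alpha_N^{-1} \<circ> Id (W): preimage under alpha_N restricted to the open upper hemisphere\<close>
definition induced_body :: "'a::euclidean_space set \<Rightarrow> ('a \<times> real) set" where
  "induced_body W = {P \<in> S1. snd P > 0 \<and> alpha_N P \<in> Id_lift ` W}"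

end

theory Submission
  imports Defs
begin

lemma sphere_ne: "sphere (0::'a::euclidean_space) 1 \<noteq> {}"
proof -
  obtain b :: 'a where "b \<in> Basis" using nonempty_Basis by blast
  then show ?thesis by (auto simp: norm_Basis intro!: exI[of _ b])
qed

lemma wulff_closed: "closed (Wulff \<gamma>)"
  unfolding Wulff_def
  by (intro closed_INT ballI) (simp add: inner_commute closed_halfspace_le)

lemma wulff_convex: "convex (Wulff \<gamma>)"
  unfolding Wulff_def
  by (intro convex_INT ballI) (simp add: inner_commute convex_halfspace_le)

lemma wulff_ball:
  fixes \<gamma> :: "'a::euclidean_space \<Rightarrow> real"
  assumes cont: "continuous_on (sphere 0 1) \<gamma>" and pos: "\<forall>\<theta>\<in>sphere 0 1. \<gamma> \<theta> > 0"
  shows "\<exists>c>0. cball 0 c \<subseteq> Wulff \<gamma>"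
proof -
  obtain t0 where t0: "t0 \<in> sphere 0 1" "\<forall>y\<in>sphere 0 1. \<gamma> t0 \<le> \<gamma> y"
    using continuous_attains_inf[OF compact_sphere sphere_ne cont] by blast
  have "cball 0 (\<gamma> t0) \<subseteq> Wulff \<gamma>"
  proof
    fix x :: 'a assume x: "x \<in> cball 0 (\<gamma> t0)"
    { fix \<theta> :: 'a assume th: "\<theta> \<in> sphere 0 1"
      have "x \<bullet> \<theta> \<le> norm x * norm \<theta>" by (rule norm_cauchy_schwarz)
      also have "\<dots> \<le> \<gamma> t0" using x th by auto
      also have "\<dots> \<le> \<gamma> \<theta>" using t0 th by auto
      finally have "x \<bullet> \<theta> \<le> \<gamma> \<theta>" . }
    then show "x \<in> Wulff \<gamma>" by (auto simp: Wulff_def)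
  qed
  then show ?thesis using pos t0 by blast
qed

lemma wulff_bounded:
  fixes \<gamma> :: "'a::euclidean_space \<Rightarrow> real"
  assumes cont: "continuous_on (sphere 0 1) \<gamma>" and pos: "\<forall>\<theta>\<in>sphere 0 1. \<gamma> \<theta> > 0"
  shows "\<exists>M>0. \<forall>x\<in>Wulff \<gamma>. norm x \<le> M"
proof -
  obtain t1 where t1: "t1 \<in> sphere 0 1" "\<forall>y\<in>sphere 0 1. \<gamma> y \<le> \<gamma> t1"
    using continuous_attains_sup[OF compact_sphere sphere_ne cont] by blast
  have "\<forall>x\<in>Wulff \<gamma>. norm x \<le> \<gamma> t1"
  proof
    fix x assume x: "x \<in> Wulff \<gamma>"
    show "norm x \<le> \<gamma> t1"
    proof (cases "x = 0")
      case True then show ?thesis using pos[rule_format, OF t1(1)] by simp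
    next
      case False
      define th where "th = x /\<^sub>R norm x"
      have th: "th \<in> sphere 0 1" using False by (simp add: th_def)
      have "x \<bullet> th = norm x" using False by (simp add: th_def dot_square_norm power2_eq_square)
      moreover have "x \<bullet> th \<le> \<gamma> th" using x th by (auto simp: Wulff_def)
      ultimately show ?thesis using t1 th by fastforce
    qed
  qed
  then show ?thesis using pos t1 by blast
qed

lemma radial_props:
  fixes \<gamma> :: "'a::euclidean_space \<Rightarrow> real"
  assumes cb: "cball 0 c \<subseteq> Wulff \<gamma>" and c: "c > 0"
    and bnd: "\<forall>x\<in>Wulff \<gamma>. norm x \<le> M" and th: "\<theta> \<in> sphere 0 1"
  shows "radial \<gamma> \<theta> > 0 \<and> radial \<gamma> \<theta> *\<^sub>R \<theta> \<in> Wulff \<gamma>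
     \<and> (\<forall>s>0. s *\<^sub>R \<theta> \<in> Wulff \<gamma> \<longrightarrow> s \<le> radial \<gamma> \<theta>)"
proof -
  define K where "K = Wulff \<gamma>"
  have clK: "closed K" unfolding K_def by (rule wulff_closed)
  have cvK: "convex K" unfolding K_def by (rule wulff_convex)
  have nth: "norm \<theta> = 1" using th by simp
  define T where "T = {s::real. 0 \<le> s \<and> s *\<^sub>R \<theta> \<in> K}"
  have cT: "c \<in> T" using cb c nth unfolding T_def K_def by auto
  have bT: "bdd_above T"
  proof (rule bdd_aboveI)
    fix s assume "s \<in> T"
    then have "s *\<^sub>R \<theta> \<in> Wulff \<gamma>" "0 \<le> s" unfolding T_def K_def by auto
    then have "norm (s *\<^sub>R \<theta>) \<le> M" using bnd by blast
    then show "s \<le> M" using nth \<open>0 \<le> s\<close> by simp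
  qed
  have Teq: "T = {0..} \<inter> ((\<lambda>s. s *\<^sub>R \<theta>) -` K)" unfolding T_def by auto
  then have clT: "closed T"
  proof -
    have "closed ((\<lambda>s. s *\<^sub>R \<theta>) -` K)"
      by (rule continuous_closed_vimage[OF clK]) (intro continuous_intros)
    then show ?thesis using Teq by (simp add: closed_Int closed_atLeast)
  qed
  define \<rho> where "\<rho> = Sup T"
  have rT: "\<rho> \<in> T" unfolding \<rho>_def using closed_contains_Sup[OF _ bT clT] cT by blast
  have rc: "c \<le> \<rho>" unfolding \<rho>_def using cT bT by (rule cSup_upper)
  have upper: "\<forall>s>0. s *\<^sub>R \<theta> \<in> K \<longrightarrow> s \<le> \<rho>"
    unfolding \<rho>_def using bT by (auto intro!: cSup_upper simp: T_def)
  have fr: "\<rho> *\<^sub>R \<theta> \<in> frontier K"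
  proof -
    have "\<rho> *\<^sub>R \<theta> \<in> closure K" using rT closure_subset unfolding T_def by blast
    moreover have "\<rho> *\<^sub>R \<theta> \<notin> interior K"
    proof
      assume "\<rho> *\<^sub>R \<theta> \<in> interior K"
      then obtain e where e: "e > 0" "ball (\<rho> *\<^sub>R \<theta>) e \<subseteq> K" by (auto simp: mem_interior)
      have "dist (\<rho> *\<^sub>R \<theta>) ((\<rho> + e/2) *\<^sub>R \<theta>) = e/2"
        using e nth by (simp add: dist_norm algebra_simps)
      then have "(\<rho> + e/2) *\<^sub>R \<theta> \<in> K" using e by auto
      moreover have "\<rho> + e/2 > 0" using rc c e by auto
      ultimately have "\<rho> + e/2 \<le> \<rho>" using upper by blast
      then show False using e by auto
    qed
    ultimately show ?thesis by (simp add: frontier_def)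
  qed
  have int0: "0 \<in> interior K"
  proof -
    have "ball 0 c \<subseteq> K" using cb ball_subset_cball unfolding K_def by blast
    then have "ball 0 c \<subseteq> interior K" by (rule interior_maximal) simp
    then show ?thesis using c by auto
  qed
  have uniq: "r = \<rho>" if r: "r > 0" "r *\<^sub>R \<theta> \<in> frontier K" for r
  proof -
    have "r *\<^sub>R \<theta> \<in> K" using r clK by (metis closure_closed frontier_def DiffD1)
    then have "r \<le> \<rho>" using upper r by auto
    moreover have "\<not> r < \<rho>"
    proof
      assume lt: "r < \<rho>"
      have "\<rho> *\<^sub>R \<theta> - (1 - r/\<rho>) *\<^sub>R (\<rho> *\<^sub>R \<theta> - 0) \<in> interior K"
        using lt r rc c rT
        by (intro mem_interior_convex_shrink[OF cvK int0]) (auto simp: T_def)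
      moreover have "\<rho> *\<^sub>R \<theta> - (1 - r/\<rho>) *\<^sub>R (\<rho> *\<^sub>R \<theta> - 0) = r *\<^sub>R \<theta>"
        using rc c by (simp add: algebra_simps)
      ultimately show False using r by (simp add: frontier_def)
    qed
    ultimately show ?thesis by simp
  qed
  have "radial \<gamma> \<theta> = \<rho>"
    unfolding radial_def K_def[symmetric]
    using rc c fr uniq by (intro the_equality) auto
  then show ?thesis using rc c rT upper unfolding T_def K_def by auto
qed

definition Lset :: "'a::euclidean_space set \<Rightarrow> 'a set" where
  "Lset K = {y. \<forall>x\<in>K. y \<bullet> x \<ge> -1}"

definition Emb :: "'a::euclidean_space \<Rightarrow> 'a \<times> real" where
  "Emb x = (x, 1) /\<^sub>R norm (x, 1::real)"

lemma nE_pos: "norm (x, 1::real) > 0"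
proof -
  have "(x, 1::real) \<noteq> 0" by (simp add: zero_prod_def)
  then show ?thesis by simp
qed

lemma Emb_sphere: "Emb x \<in> sphere 0 1"
  using nE_pos[of x] unfolding Emb_def mem_sphere_0 norm_scaleR by simp

lemma Emb_snd: "snd (Emb x) > 0"
  using nE_pos[of x] by (simp add: Emb_def)

lemma Emb_fst: "fst (Emb x) = x /\<^sub>R norm (x, 1::real)"
  by (simp add: Emb_def)

lemma inner_Emb: "inner P (Emb x) = (fst P \<bullet> x + snd P) / norm (x, 1::real)"
  using nE_pos[of x] by (cases P) (simp add: Emb_def inner_Pair field_simps)

lemma inner_Emb_Emb: "inner (Emb y) (Emb z) = (y \<bullet> z + 1) / (norm (y,1::real) * norm (z,1::real))"
  using nE_pos[of y] nE_pos[of z] unfolding inner_Emb by (simp add: Emb_def field_simps)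

lemma Emb_inj: "Emb y = Emb z \<Longrightarrow> y = z"
proof -
  assume eq: "Emb y = Emb z"
  have "snd (Emb y) = snd (Emb z)" using eq by simp
  then have n: "norm (y,1::real) = norm (z,1::real)" using nE_pos[of y] nE_pos[of z] by (simp add: Emb_def)
  have "fst (Emb y) = fst (Emb z)" using eq by simp
  then show ?thesis using n nE_pos[of y] by (simp add: Emb_def)
qed

lemma Emb_neg: "Emb z \<noteq> - Emb y"
proof
  assume "Emb z = - Emb y"
  then have "snd (Emb z) = - snd (Emb y)" by simp
  then show False using Emb_snd[of z] Emb_snd[of y] by linarith
qed

lemma Emb_repr:
  assumes "Q \<in> sphere 0 1" "snd Q > 0"
  shows "Q = Emb (fst Q /\<^sub>R snd Q)"
proof -
  obtain p t where Q: "Q = (p, t)" by (cases Q)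
  have t: "t > 0" using assms Q by simp
  have eq: "(p /\<^sub>R t, 1::real) = inverse t *\<^sub>R (p, t)" using t by simp
  have "norm (p /\<^sub>R t, 1::real) = norm (inverse t *\<^sub>R (p, t))" by (simp only: eq)
  also have "\<dots> = \<bar>inverse t\<bar> * norm (p, t)" by (rule norm_scaleR)
  also have "\<dots> = inverse t" using assms Q t by simp
  finally have n: "norm (p /\<^sub>R t, 1::real) = inverse t" .
  have "Emb (fst Q /\<^sub>R snd Q) = Emb (p /\<^sub>R t)" using Q by simp
  also have "\<dots> = (p /\<^sub>R t, 1) /\<^sub>R inverse t" by (simp only: Emb_def n)
  also have "\<dots> = (inverse t *\<^sub>R (p, t)) /\<^sub>R inverse t" by (simp only: eq)
  also have "\<dots> = (p, t)" using t by simp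
  finally show ?thesis using Q by simp
qed

lemma induced_body_eq:
  "induced_body K = {Q \<in> sphere 0 1. snd Q > 0 \<and> fst Q /\<^sub>R snd Q \<in> K}"
  by (auto simp: induced_body_def alpha_N_def Id_lift_def)

lemma Emb_in_B: "Emb x \<in> induced_body K \<longleftrightarrow> x \<in> K"
proof -
  have "fst (Emb x) /\<^sub>R snd (Emb x) = x" using nE_pos[of x] by (simp add: Emb_def)
  then show ?thesis using Emb_sphere[of x] Emb_snd[of x] by (simp add: induced_body_eq)
qed

lemma B_Emb: "Q \<in> induced_body K \<Longrightarrow> \<exists>x\<in>K. Q = Emb x"
proof -
  assume "Q \<in> induced_body K"
  then have "Q \<in> sphere 0 1" "snd Q > 0" "fst Q /\<^sub>R snd Q \<in> K" by (auto simp: induced_body_eq)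
  then show ?thesis using Emb_repr by blast
qed

lemma dual_eq:
  fixes \<gamma> :: "'a::euclidean_space \<Rightarrow> real"
  assumes cb: "cball 0 c \<subseteq> Wulff \<gamma>" and c: "c > 0"
    and bnd: "\<forall>x\<in>Wulff \<gamma>. norm x \<le> M"
  shows "dual_Wulff \<gamma> = Lset (Wulff \<gamma>)"
proof
  note rp = radial_props[OF cb c bnd]
  show "Lset (Wulff \<gamma>) \<subseteq> dual_Wulff \<gamma>"
  proof
    fix x assume x: "x \<in> Lset (Wulff \<gamma>)"
    { fix \<theta> :: 'a assume th: "\<theta> \<in> sphere 0 1"
      then have mth: "- \<theta> \<in> sphere 0 1" by simp
      define r where "r = radial \<gamma> (- \<theta>)"
      have r: "r > 0" "r *\<^sub>R (- \<theta>) \<in> Wulff \<gamma>" using rp[OF mth] by (auto simp: r_def)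
      then have "x \<bullet> (r *\<^sub>R (- \<theta>)) \<ge> -1" using x by (auto simp: Lset_def)
      then have "r * (x \<bullet> \<theta>) \<le> 1" by simp
      then have "x \<bullet> \<theta> \<le> 1 / r" using r by (simp add: field_simps mult.commute)
      then have "x \<bullet> \<theta> \<le> dual_gamma \<gamma> \<theta>" by (simp add: dual_gamma_def r_def) }
    then show "x \<in> dual_Wulff \<gamma>" by (auto simp: dual_Wulff_def Wulff_def)
  qed
  show "dual_Wulff \<gamma> \<subseteq> Lset (Wulff \<gamma>)"
  proof
    fix x assume x: "x \<in> dual_Wulff \<gamma>"
    { fix y assume y: "y \<in> Wulff \<gamma>"
      have "x \<bullet> y \<ge> -1"
      proof (cases "y = 0")
        case True then show ?thesis by simp
      next
        case False
        define \<theta> where "\<theta> = - (y /\<^sub>R norm y)"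
        have th: "\<theta> \<in> sphere 0 1" using False by (simp add: \<theta>_def)
        have mth: "- \<theta> \<in> sphere 0 1" using th by simp
        have ny: "norm y > 0" using False by simp
        have "norm y *\<^sub>R (- \<theta>) = y" using ny by (simp add: \<theta>_def)
        then have "norm y \<le> radial \<gamma> (- \<theta>)" using rp[OF mth] y ny by metis
        moreover have "x \<bullet> \<theta> \<le> 1 / radial \<gamma> (- \<theta>)"
          using x th by (auto simp: dual_Wulff_def Wulff_def dual_gamma_def)
        moreover have "1 / radial \<gamma> (- \<theta>) \<le> 1 / norm y"
          using \<open>norm y \<le> radial \<gamma> (- \<theta>)\<close> ny rp[OF mth] by (intro divide_left_mono) (auto intro!: mult_pos_pos)
        ultimately have "x \<bullet> \<theta> \<le> 1 / norm y" by linarith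
        moreover have "x \<bullet> \<theta> = - (x \<bullet> y) / norm y" using ny by (simp add: \<theta>_def field_simps)
        ultimately have "- (x \<bullet> y) / norm y \<le> 1 / norm y" by simp
        then show ?thesis using ny by (simp add: divide_right_mono_neg field_simps)
      qed }
    then show "x \<in> Lset (Wulff \<gamma>)" by (auto simp: Lset_def)
  qed
qed

lemma B_closed: "closedin (top_of_set (sphere 0 1)) (induced_body (Wulff \<gamma>))"
proof -
  define C where "C = {z::'a::euclidean_space \<times> real. snd z \<ge> 0} \<inter>
     (\<Inter>\<theta>\<in>sphere 0 1. {z. fst z \<bullet> \<theta> \<le> snd z * \<gamma> \<theta>})"
  have c1: "closed {z::'a \<times> real. 0 \<le> snd z}"
    by (rule closed_Collect_le[OF continuous_on_const continuous_on_snd[OF continuous_on_id]])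
  have c2: "closed {z::'a \<times> real. fst z \<bullet> \<theta> \<le> snd z * \<gamma> \<theta>}" for \<theta>
    by (rule closed_Collect_le[OF continuous_on_inner[OF continuous_on_fst[OF continuous_on_id] continuous_on_const]
          continuous_on_mult[OF continuous_on_snd[OF continuous_on_id] continuous_on_const]])
  have "closed C" unfolding C_def
    using c1 c2 by (intro closed_Int closed_INT ballI) auto
  moreover have "induced_body (Wulff \<gamma>) = sphere 0 1 \<inter> C"
  proof (intro equalityI subsetI)
    fix z assume z: "z \<in> induced_body (Wulff \<gamma>)"
    then have z1: "z \<in> sphere 0 1" "snd z > 0" "fst z /\<^sub>R snd z \<in> Wulff \<gamma>" by (auto simp: induced_body_eq)
    { fix \<theta> :: 'a assume "\<theta> \<in> sphere 0 1"
      then have "(fst z /\<^sub>R snd z) \<bullet> \<theta> \<le> \<gamma> \<theta>" using z1 by (auto simp: Wulff_def)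
      then have "fst z \<bullet> \<theta> \<le> snd z * \<gamma> \<theta>" using z1 by (simp add: field_simps) }
    then show "z \<in> sphere 0 1 \<inter> C" using z1 by (auto simp: C_def)
  next
    fix z assume z: "z \<in> sphere 0 1 \<inter> C"
    obtain p t where zp: "z = (p, t)" by (cases z)
    have t0: "t \<ge> 0" and le: "\<And>\<theta>. \<theta> \<in> sphere 0 1 \<Longrightarrow> p \<bullet> \<theta> \<le> t * \<gamma> \<theta>"
      using z zp by (auto simp: C_def)
    have "t \<noteq> 0"
    proof
      assume t: "t = 0"
      show False
      proof (cases "p = 0")
        case True then show False using z zp t by simp
      next
        case False
        have "p \<bullet> (p /\<^sub>R norm p) \<le> 0" using le[of "p /\<^sub>R norm p"] False t by simp
        moreover have "p \<bullet> (p /\<^sub>R norm p) = norm p" using False by (simp add: dot_square_norm power2_eq_square)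
        ultimately show False using False by simp
      qed
    qed
    then have tp: "t > 0" using t0 by simp
    { fix \<theta> :: 'a assume "\<theta> \<in> sphere 0 1"
      then have "(p /\<^sub>R t) \<bullet> \<theta> \<le> \<gamma> \<theta>" using le tp by (simp add: field_simps) }
    then show "z \<in> induced_body (Wulff \<gamma>)" using z zp tp by (auto simp: induced_body_eq Wulff_def)
  qed
  ultimately show ?thesis by (simp add: closedin_closed_Int)
qed

lemma NI:
  fixes P q :: "'a::euclidean_space \<times> real"
  assumes P: "P \<in> sphere 0 1" and q: "q \<in> sphere 0 1" and Pq: "P \<bullet> q = 0" and S: "S \<subseteq> hemi P"
  shows "q \<notin> top_of_set (sphere 0 1) interior_of S"
proof
  assume "q \<in> top_of_set (sphere 0 1) interior_of S"
  then obtain U where U: "openin (top_of_set (sphere 0 1)) U" "q \<in> U" "U \<subseteq> S"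
    by (auto simp: interior_of_def)
  then obtain T where T: "open T" "U = sphere 0 1 \<inter> T" by (auto simp: openin_open)
  then obtain e where e: "e > 0" "ball q e \<subseteq> T" using U(2) open_contains_ball by blast
  define b where "b = min (1/2) (e/4)"
  define a where "a = sqrt (1 - b^2)"
  have b: "0 < b" "b \<le> 1/2" "b \<le> e/4" using e by (auto simp: b_def)
  have b2: "b^2 \<le> b/2" using b by (simp add: power2_eq_square mult_left_le)
  have a: "0 \<le> a" "a \<le> 1" "a^2 = 1 - b^2" using b b2 by (auto simp: a_def)
  have a2: "1 - b^2 \<le> a"
  proof -
    have "a * a \<le> a * 1" using a by (intro mult_left_mono) auto
    then show ?thesis using a by (simp add: power2_eq_square)
  qed
  have nP: "P \<bullet> P = 1" "q \<bullet> q = 1" using P q by (simp_all add: norm_eq_1[symmetric])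
  have qP: "q \<bullet> P = 0" using Pq by (simp add: inner_commute)
  define R where "R = a *\<^sub>R q - b *\<^sub>R P"
  have "R \<bullet> R = a^2 + b^2"
    unfolding R_def using nP qP Pq
    by (simp add: inner_diff_left inner_diff_right power2_eq_square)
  then have nR: "norm R = 1" using a by (simp add: norm_eq_1)
  have "q - R = (1 - a) *\<^sub>R q + b *\<^sub>R P" by (simp add: R_def algebra_simps)
  then have "norm (q - R) \<le> norm ((1 - a) *\<^sub>R q) + norm (b *\<^sub>R P)"
    by (metis norm_triangle_ineq)
  also have "\<dots> = (1 - a) + b" using a b P q by simp
  also have "\<dots> < e" using a2 b2 b by linarith
  finally have "dist q R < e" by (simp add: dist_norm)
  then have "R \<in> U" using e T nR by auto
  then have "R \<in> hemi P" using U S by auto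
  moreover have "P \<bullet> R = - b" unfolding R_def using nP Pq by (simp add: inner_diff_right)
  ultimately show False using b by (simp add: hemi_def)
qed

lemma hemi_closed: "closedin (top_of_set (sphere 0 1)) (hemi P)"
proof -
  have "hemi P = sphere 0 1 \<inter> {Q. inner P Q \<ge> 0}" by (auto simp: hemi_def)
  then show ?thesis by (simp add: closedin_closed_Int closed_halfspace_ge)
qed

lemma supp_char:
  fixes \<gamma> :: "'a::euclidean_space \<Rightarrow> real"
  assumes cb: "cball 0 c \<subseteq> Wulff \<gamma>" and c: "c > 0" and P: "P \<in> sphere 0 1"
  shows "supports P (induced_body (Wulff \<gamma>)) \<longleftrightarrow>
    (\<exists>y. y \<in> Lset (Wulff \<gamma>) \<and> (\<exists>x\<in>Wulff \<gamma>. y \<bullet> x = -1) \<and> P = Emb y)"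
proof
  let ?K = "Wulff \<gamma>" and ?B = "induced_body (Wulff \<gamma>)" and ?X = "top_of_set (sphere (0::'a\<times>real) 1)"
  assume sup: "supports P ?B"
  then obtain q where BH: "?B \<subseteq> hemi P" and q1: "q \<in> ?X frontier_of ?B" and q2: "q \<in> ?X frontier_of hemi P"
    by (auto simp: supports_def)
  have qB: "q \<in> ?B" using q1 frontier_of_subset_closedin[OF B_closed] by blast
  have qH: "q \<in> hemi P" using q2 frontier_of_subset_closedin[OF hemi_closed] by blast
  have "\<not> P \<bullet> q > 0"
  proof
    assume pos: "P \<bullet> q > 0"
    let ?V = "sphere 0 1 \<inter> {Q. P \<bullet> Q > 0}"
    have "openin ?X ?V" by (rule openin_open_Int) (rule open_halfspace_gt)
    moreover have "?V \<subseteq> hemi P" by (auto simp: hemi_def)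
    ultimately have "?V \<subseteq> ?X interior_of hemi P" by (rule interior_of_maximal[rotated])
    moreover have "q \<in> ?V" using qH pos by (auto simp: hemi_def)
    ultimately show False using q2 by (auto simp: frontier_of_def)
  qed
  then have Pq: "P \<bullet> q = 0" using qH by (auto simp: hemi_def)
  obtain x0 where x0: "x0 \<in> ?K" "q = Emb x0" using B_Emb[OF qB] by blast
  obtain p t where Pp: "P = (p, t)" by (cases P)
  have allx: "p \<bullet> x + t \<ge> 0" if x: "x \<in> ?K" for x
  proof -
    have "Emb x \<in> hemi P" using BH Emb_in_B[of x ?K] x by blast
    then have "(p \<bullet> x + t) / norm (x, 1::real) \<ge> 0" using inner_Emb[of P x] Pp by (simp add: hemi_def)
    then show ?thesis using nE_pos[of x] by (simp add: zero_le_divide_iff)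
  qed
  have px0: "p \<bullet> x0 + t = 0"
    using Pq x0 inner_Emb[of P x0] Pp nE_pos[of x0] by simp
  have "0 \<in> ?K" using cb c by auto
  then have t0: "t \<ge> 0" using allx[of 0] by simp
  have "t \<noteq> 0"
  proof
    assume t: "t = 0"
    show False
    proof (cases "p = 0")
      case True then show False using P Pp t by simp
    next
      case False
      define x where "x = - (c / norm p) *\<^sub>R p"
      have "x \<in> cball 0 c" using False c by (simp add: x_def)
      then have "p \<bullet> x + t \<ge> 0" using allx cb by blast
      moreover have "p \<bullet> x = - c * norm p" using False
        by (simp add: x_def dot_square_norm power2_eq_square)
      moreover have "c * norm p > 0" using False c by simp
      ultimately show False using t by linarith
    qed
  qed
  then have tp: "t > 0" using t0 by simp
  define y where "y = p /\<^sub>R t"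
  have "y \<in> Lset ?K"
  proof -
    { fix x assume "x \<in> ?K"
      then have "p \<bullet> x + t \<ge> 0" by (rule allx)
      then have "y \<bullet> x \<ge> -1" using tp by (simp add: y_def field_simps) }
    then show ?thesis by (auto simp: Lset_def)
  qed
  moreover have "y \<bullet> x0 = -1" using px0 tp by (simp add: y_def field_simps)
  moreover have "P = Emb y" using Emb_repr[OF P] Pp tp by (simp add: y_def)
  ultimately show "\<exists>y. y \<in> Lset ?K \<and> (\<exists>x\<in>?K. y \<bullet> x = -1) \<and> P = Emb y" using x0 by blast
next
  let ?K = "Wulff \<gamma>" and ?B = "induced_body (Wulff \<gamma>)" and ?X = "top_of_set (sphere (0::'a\<times>real) 1)"
  assume "\<exists>y. y \<in> Lset ?K \<and> (\<exists>x\<in>?K. y \<bullet> x = -1) \<and> P = Emb y"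
  then obtain y x0 where y: "y \<in> Lset ?K" and x0: "x0 \<in> ?K" "y \<bullet> x0 = -1" and Py: "P = Emb y" by blast
  have BH: "?B \<subseteq> hemi P"
  proof
    fix Q assume Q: "Q \<in> ?B"
    then obtain z where z: "z \<in> ?K" "Q = Emb z" using B_Emb by blast
    have "y \<bullet> z + 1 \<ge> 0" using y z by (auto simp: Lset_def)
    then have "P \<bullet> Q \<ge> 0" using Py z inner_Emb_Emb[of y z] nE_pos[of y] nE_pos[of z] by simp
    then show "Q \<in> hemi P" using z Emb_sphere by (simp add: hemi_def)
  qed
  define q where "q = Emb x0"
  have qB: "q \<in> ?B" using x0 by (simp add: q_def Emb_in_B)
  have Pq: "P \<bullet> q = 0" using x0 Py by (simp add: q_def inner_Emb_Emb)
  have qS: "q \<in> sphere 0 1" unfolding q_def by (rule Emb_sphere)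
  have PS: "P \<in> sphere 0 1" by (rule P)
  have Bsub: "?B \<subseteq> sphere 0 1" by (auto simp: induced_body_def)
  have Hsub: "hemi P \<subseteq> sphere 0 1" by (auto simp: hemi_def)
  have f1: "q \<in> ?X frontier_of ?B"
    unfolding frontier_of_def using closure_of_subset[of ?B ?X] Bsub qB NI[OF PS qS Pq BH] by auto
  have f2: "q \<in> ?X frontier_of hemi P"
    unfolding frontier_of_def using closure_of_subset[of "hemi P" ?X] Hsub BH qB NI[OF PS qS Pq order_refl] by auto
  show "supports P ?B" unfolding supports_def using BH f1 f2 by blast
qed

lemma inner_unit_bounds:
  fixes P Q :: "'b::real_inner"
  assumes "norm P = 1" "norm Q = 1"
  shows "-1 \<le> P \<bullet> Q \<and> P \<bullet> Q \<le> 1"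
  using Cauchy_Schwarz_ineq2[of P Q] assms by auto

lemma NORM:
  fixes \<gamma> :: "'a::euclidean_space \<Rightarrow> real"
  assumes cb: "cball 0 c \<subseteq> Wulff \<gamma>" and c: "c > 0"
    and bnd: "\<forall>x\<in>Wulff \<gamma>. norm x \<le> M" and y: "y \<noteq> 0"
  shows "\<exists>a>0. (y /\<^sub>R a) \<in> Lset (Wulff \<gamma>) \<and> (\<exists>x\<in>Wulff \<gamma>. (y /\<^sub>R a) \<bullet> x = -1)
           \<and> (y \<in> Lset (Wulff \<gamma>) \<longrightarrow> a \<le> 1)"
proof -
  let ?K = "Wulff \<gamma>"
  have "bounded ?K" using bnd by (auto simp: bounded_iff)
  then have cK: "compact ?K" using wulff_closed by (simp add: compact_eq_bounded_closed)
  have ne: "?K \<noteq> {}" using cb c by auto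
  have "continuous_on ?K (\<lambda>x. y \<bullet> x)" by (intro continuous_intros)
  then obtain xm where xm: "xm \<in> ?K" "\<forall>x\<in>?K. y \<bullet> xm \<le> y \<bullet> x"
    using continuous_attains_inf[OF cK ne] by blast
  define x' where "x' = - (c / norm y) *\<^sub>R y"
  have "x' \<in> cball 0 c" using y c by (simp add: x'_def)
  then have "x' \<in> ?K" using cb by blast
  then have le: "y \<bullet> xm \<le> y \<bullet> x'" using xm by blast
  have "y \<bullet> x' = - c * norm y" using y by (simp add: x'_def dot_square_norm power2_eq_square)
  moreover have "c * norm y > 0" using y c by simp
  ultimately have neg: "y \<bullet> xm < 0" using le by linarith
  define a where "a = - (y \<bullet> xm)"
  have a: "a > 0" using neg by (simp add: a_def)
  have "(y /\<^sub>R a) \<bullet> x \<ge> -1" if "x \<in> ?K" for x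
  proof -
    have "y \<bullet> x \<ge> - a" using xm that by (simp add: a_def)
    then show ?thesis using a by (simp add: field_simps)
  qed
  then have inL: "(y /\<^sub>R a) \<in> Lset ?K" by (auto simp: Lset_def)
  have "(y /\<^sub>R a) \<bullet> xm = -1" using a by (simp add: a_def)
  moreover have "y \<in> Lset ?K \<longrightarrow> a \<le> 1" using xm by (auto simp: Lset_def a_def)
  ultimately show ?thesis using a inL xm by blast
qed

theorem theorem1:
  fixes \<gamma> :: "'a::euclidean_space \<Rightarrow> real"
  assumes "DIM('a) \<ge> 2"
    and "continuous_on (sphere 0 1) \<gamma>"
    and "\<forall>\<theta>\<in>sphere 0 1. \<gamma> \<theta> > 0"
  shows "self_dual \<gamma> \<longleftrightarrow> constant_width (induced_body (Wulff \<gamma>)) (pi / 2)"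
proof -
  obtain c where cb: "cball 0 c \<subseteq> Wulff \<gamma>" and c: "c > 0" using wulff_ball[OF assms(2,3)] by blast
  obtain M where M: "M > 0" and bnd: "\<forall>x\<in>Wulff \<gamma>. norm x \<le> M" using wulff_bounded[OF assms(2,3)] by blast
  define K where "K = Wulff \<gamma>"
  define B where "B = induced_body K"
  define L where "L = Lset K"
  have sd: "self_dual \<gamma> \<longleftrightarrow> K = L" using dual_eq[OF cb c bnd] by (simp add: self_dual_def K_def L_def)
  have sc: "supports P B \<longleftrightarrow> (\<exists>y. y \<in> L \<and> (\<exists>x\<in>K. y \<bullet> x = -1) \<and> P = Emb y)"
    if "P \<in> sphere 0 1" for P
    using supp_char[OF cb c that] by (simp add: K_def B_def L_def)
  define SS where "SS y = {pi - arccos (Emb y \<bullet> Q) | Q. Q \<in> sphere 0 1 \<and> Q \<noteq> Emb y \<and> Q \<noteq> - Emb y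
      \<and> supports Q B \<and> B \<subseteq> hemi (Emb y) \<inter> hemi Q}" for y
  have sw: "sph_width B (Emb y) = Inf (SS y)" for y
    by (simp add: sph_width_def lune_thickness_def arc_length_def SS_def)
  have supE: "supports (Emb y) B" if "y \<in> L" "\<exists>x\<in>K. y \<bullet> x = -1" for y
    using sc[OF Emb_sphere[of y]] that by blast
  have supB: "B \<subseteq> hemi Q" if "supports Q B" for Q using that by (simp add: supports_def)
  have nE1: "norm (Emb y) = 1" for y using Emb_sphere[of y] by simp
  have ib: "-1 \<le> Emb y \<bullet> Q \<and> Emb y \<bullet> Q \<le> 1" if "Q \<in> sphere 0 1" for y Q
    using inner_unit_bounds[OF nE1[of y], of Q] that by simp
  have memS: "pi - arccos (Emb y \<bullet> Emb z) \<in> SS y"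
    if "y \<in> L" "\<exists>x\<in>K. y \<bullet> x = -1" "z \<in> L" "\<exists>x\<in>K. z \<bullet> x = -1" "z \<noteq> y" for y z
  proof -
    have "Emb z \<noteq> Emb y" using Emb_inj that(5) by metis
    moreover have "Emb z \<noteq> - Emb y" by (rule Emb_neg)
    moreover have "supports (Emb z) B" using supE that by blast
    moreover have "supports (Emb y) B" using supE that by blast
    ultimately have "Emb z \<in> sphere 0 1 \<and> Emb z \<noteq> Emb y \<and> Emb z \<noteq> - Emb y \<and> supports (Emb z) B
       \<and> B \<subseteq> hemi (Emb y) \<inter> hemi (Emb z)" using Emb_sphere[of z] supB by blast
    then show ?thesis unfolding SS_def by (intro CollectI exI[of _ "Emb z"]) simp
  qed
  have elemS: "\<exists>z. z \<in> L \<and> (\<exists>x\<in>K. z \<bullet> x = -1) \<and> t = pi - arccos (Emb y \<bullet> Emb z)"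
    if tS: "t \<in> SS y" for y t
  proof -
    obtain Q where Q: "t = pi - arccos (Emb y \<bullet> Q)" "Q \<in> sphere 0 1" "supports Q B"
      using tS unfolding SS_def by blast
    then obtain z where "z \<in> L" "\<exists>x\<in>K. z \<bullet> x = -1" "Q = Emb z" using sc by blast
    then show ?thesis using Q by blast
  qed
  have bddS: "bdd_below (SS y)" for y
  proof (rule bdd_belowI)
    fix t assume "t \<in> SS y"
    then obtain Q where Q: "t = pi - arccos (Emb y \<bullet> Q)" "Q \<in> sphere 0 1"
      unfolding SS_def by blast
    then show "0 \<le> t" using ib[OF Q(2), of y] arccos_ubound[of "Emb y \<bullet> Q"] by simp
  qed
  show ?thesis
  proof
    assume "self_dual \<gamma>" then have KL: "K = L" using sd by simp
    show "constant_width (induced_body (Wulff \<gamma>)) (pi/2)"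
      unfolding constant_width_def K_def[symmetric] B_def[symmetric]
    proof (intro ballI impI)
      fix P assume PS: "P \<in> sphere 0 1" and sP: "supports P B"
      obtain y x0 where y: "y \<in> L" and x0: "x0 \<in> K" "y \<bullet> x0 = -1" and Py: "P = Emb y"
        using sc[OF PS] sP by blast
      have PQ0: "Emb y \<bullet> Emb x0 = 0" using x0 by (simp add: inner_Emb_Emb)
      have PP: "Emb y \<bullet> Emb y = 1" using nE1[of y] by (simp add: norm_eq_1[symmetric])
      have x0L: "x0 \<in> L" using x0 KL by simp
      have yK: "y \<in> K" using y KL by simp
      have "x0 \<bullet> y = -1" using x0 by (simp add: inner_commute)
      then have mem0: "pi - arccos (Emb y \<bullet> Emb x0) \<in> SS y"
      proof (intro memS[OF y _ x0L])
        show "\<exists>x\<in>K. y \<bullet> x = - 1" using x0 by blast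
        show "\<exists>x\<in>K. x0 \<bullet> x = - 1" using yK \<open>x0 \<bullet> y = -1\<close> by blast
        show "x0 \<noteq> y" using PQ0 PP by auto
      qed
      have mem: "pi/2 \<in> SS y" using mem0 PQ0 by simp
      have low: "pi/2 \<le> t" if tS: "t \<in> SS y" for t
      proof -
        obtain z where z: "z \<in> L" "t = pi - arccos (Emb y \<bullet> Emb z)" using elemS[OF tS] by blast
        have zK: "z \<in> K" using z(1) KL by simp
        have "\<forall>x\<in>K. y \<bullet> x \<ge> -1" using y by (simp add: L_def Lset_def)
        then have "y \<bullet> z \<ge> -1" using zK by blast
        then have "Emb y \<bullet> Emb z \<ge> 0" using nE_pos[of y] nE_pos[of z] by (simp add: inner_Emb_Emb)
        then have "arccos (Emb y \<bullet> Emb z) \<le> pi/2" using ib[OF Emb_sphere[of z], of y] by (intro arccos_le_pi2) auto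
        then show ?thesis using z by simp
      qed
      show "sph_width B P = pi/2" using Py sw cInf_eq_minimum[OF mem low] by simp
    qed
  next
    assume cw: "constant_width (induced_body (Wulff \<gamma>)) (pi/2)"
    have cwE: "Inf (SS y) = pi/2" if "y \<in> L" "\<exists>x\<in>K. y \<bullet> x = -1" for y
    proof -
      have "supports (Emb y) B" using supE that by blast
      then have "sph_width B (Emb y) = pi/2" using cw Emb_sphere[of y]
        unfolding constant_width_def K_def[symmetric] B_def[symmetric] by blast
      then show ?thesis using sw by simp
    qed
    have W1: "y \<bullet> z \<ge> -1" if y: "y \<in> L" "\<exists>x\<in>K. y \<bullet> x = -1" and z: "z \<in> L" "\<exists>x\<in>K. z \<bullet> x = -1" for y z
    proof (cases "z = y")
      case True
      have "0 \<le> y \<bullet> y" by (rule inner_ge_zero)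
      then have "-1 \<le> y \<bullet> y" by linarith
      then show ?thesis using True by simp
    next
      case False
      let ?e = "Emb y \<bullet> Emb z"
      have "Inf (SS y) \<le> pi - arccos ?e" using cInf_lower[OF memS[OF y z False] bddS] .
      then have ae: "arccos ?e \<le> pi/2" using cwE[OF y] by simp
      have eb: "-1 \<le> ?e" "?e \<le> 1" using ib[OF Emb_sphere[of z], of y] by auto
      have "?e \<ge> 0"
      proof (rule ccontr)
        assume "\<not> ?e \<ge> 0"
        then have "arccos 0 < arccos ?e" using eb by (intro arccos_less_arccos) auto
        then show False using ae by simp
      qed
      then have "(y \<bullet> z + 1) / (norm (y,1::real) * norm (z,1::real)) \<ge> 0" by (simp add: inner_Emb_Emb)
      moreover define D where "D = norm (y,1::real) * norm (z,1::real)"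
      moreover have d: "0 < D" using nE_pos[of y] nE_pos[of z] by (simp add: D_def)
      ultimately have "0 \<le> (y \<bullet> z + 1) / D * D" by (intro mult_nonneg_nonneg) auto
      then have "y \<bullet> z + 1 \<ge> 0" using d by simp
      then show ?thesis by simp
    qed
    have NORM': "\<exists>a>0. (y /\<^sub>R a) \<in> L \<and> (\<exists>x\<in>K. (y /\<^sub>R a) \<bullet> x = -1) \<and> (y \<in> L \<longrightarrow> a \<le> 1)"
      if "y \<noteq> 0" for y
      using NORM[OF cb c bnd that] by (simp add: K_def L_def)
    have LL: "y \<bullet> z \<ge> -1" if y: "y \<in> L" and z: "z \<in> L" for y z
    proof (cases "y = 0 \<or> z = 0")
      case True then show ?thesis by auto
    next
      case False
      obtain a where a: "a > 0" "y /\<^sub>R a \<in> L" "\<exists>x\<in>K. (y /\<^sub>R a) \<bullet> x = -1" "a \<le> 1"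
        using NORM'[of y] False y by blast
      obtain b where b: "b > 0" "z /\<^sub>R b \<in> L" "\<exists>x\<in>K. (z /\<^sub>R b) \<bullet> x = -1" "b \<le> 1"
        using NORM'[of z] False z by blast
      have w: "(y /\<^sub>R a) \<bullet> (z /\<^sub>R b) \<ge> -1" using W1[OF a(2,3) b(2,3)] .
      have eq: "y \<bullet> z = (a * b) * ((y /\<^sub>R a) \<bullet> (z /\<^sub>R b))" using a(1) b(1) by (simp add: field_simps)
      have ab: "a * b > 0" "a * b \<le> 1" using a b by (auto intro: mult_le_one)
      have "(a * b) * ((y /\<^sub>R a) \<bullet> (z /\<^sub>R b)) \<ge> (a * b) * (-1)"
        using w ab by (intro mult_left_mono) auto
      then show ?thesis using eq ab by linarith
    qed
    have LK: "L \<subseteq> K"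
    proof
      fix y assume y: "y \<in> L"
      { fix \<theta> :: 'a assume th: "\<theta> \<in> sphere 0 1"
        have gp: "\<gamma> \<theta> > 0" using assms(3) th by blast
        define z where "z = - (1 / \<gamma> \<theta>) *\<^sub>R \<theta>"
        have "z \<bullet> x \<ge> -1" if "x \<in> K" for x
        proof -
          have "x \<bullet> \<theta> \<le> \<gamma> \<theta>" using that th by (auto simp: K_def Wulff_def)
          then show ?thesis using gp by (simp add: z_def inner_commute field_simps)
        qed
        then have "z \<in> L" by (auto simp: L_def Lset_def)
        then have "y \<bullet> z \<ge> -1" using LL y by blast
        then have "y \<bullet> \<theta> \<le> \<gamma> \<theta>" using gp by (simp add: z_def field_simps) }
      then show "y \<in> K" by (auto simp: K_def Wulff_def)
    qed
    have KLs: "K \<subseteq> L"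
    proof
      fix x assume x: "x \<in> K"
      show "x \<in> L"
      proof (cases "x = 0")
        case True then show ?thesis by (simp add: L_def Lset_def)
      next
        case False
        obtain a where a: "a > 0" "x /\<^sub>R a \<in> L" "\<exists>w\<in>K. (x /\<^sub>R a) \<bullet> w = -1"
          using NORM'[OF False] by blast
        define y where "y = x /\<^sub>R a"
        have yL: "y \<in> L" and y1: "\<exists>x\<in>K. y \<bullet> x = -1" using a by (auto simp: y_def)
        have a1: "a \<le> 1"
        proof (rule ccontr)
          assume "\<not> a \<le> 1" then have a1: "a > 1" by simp
          have y0: "y \<noteq> 0" using y1 by auto
          then have my0: "- y \<noteq> 0" by simp
          obtain b where b: "b > 0" "(- y) /\<^sub>R b \<in> L" "\<exists>x\<in>K. ((- y) /\<^sub>R b) \<bullet> x = -1"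
            using NORM'[OF my0] by blast
          have "(- y) /\<^sub>R b \<noteq> y"
          proof
            assume eqy: "(- y) /\<^sub>R b = y"
            have e1: "b *\<^sub>R ((- y) /\<^sub>R b) = b *\<^sub>R y" using arg_cong[OF eqy, of "\<lambda>v. b *\<^sub>R v"] by (simp only:)
            have e2: "b *\<^sub>R ((- y) /\<^sub>R b) = - y" using b by simp
            have "- y = b *\<^sub>R y" by (rule trans[OF e2[symmetric] e1])
            then have h: "b *\<^sub>R y = - y" by simp
            have "(1 + b) *\<^sub>R y = y + b *\<^sub>R y" by (simp add: scaleR_add_left)
            also have "\<dots> = 0" unfolding h by simp
            finally have "(1 + b) *\<^sub>R y = 0" .
            then show False using y0 b by simp
          qed
          then have ne: "SS y \<noteq> {}" using memS[OF yL y1 b(2,3)] by blast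
          define c0 where "c0 = (1 - 1/a) / (norm (y, 1::real) * sqrt (M^2 + 1))"
          define c1 where "c1 = min c0 1"
          have "1/a < 1" using a1 by simp
          then have num: "1 - 1/a > 0" by simp
          have den: "norm (y, 1::real) * sqrt (M^2 + 1) > 0"
            using nE_pos[of y] by (intro mult_pos_pos) (auto intro: add_nonneg_pos)
          have c0p: "c0 > 0" unfolding c0_def using num den by (rule divide_pos_pos)
          have c1: "0 < c1" "c1 \<le> 1" "c1 \<le> c0" using c0p by (auto simp: c1_def)
          have bound: "pi - arccos c1 \<le> t" if tS: "t \<in> SS y" for t
          proof -
            obtain z where z: "z \<in> L" "t = pi - arccos (Emb y \<bullet> Emb z)" using elemS[OF tS] by blast
            have zK: "z \<in> K" using z LK by blast
            have nz: "norm z \<le> M" using zK bnd by (simp add: K_def)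
            have "z \<bullet> x \<ge> -1" using z x by (auto simp: L_def Lset_def)
            then have yz: "y \<bullet> z \<ge> - 1/a" using a by (simp add: y_def inner_commute field_simps)
            have N: "y \<bullet> z + 1 \<ge> 1 - 1/a" using yz by simp
            have "norm (z, 1::real) = sqrt ((norm z)^2 + 1)" by (simp add: norm_Pair)
            also have "\<dots> \<le> sqrt (M^2 + 1)"
              using nz by (intro real_sqrt_le_mono add_right_mono power_mono) auto
            finally have nzM: "norm (z, 1::real) \<le> sqrt (M^2 + 1)" .
            have "c0 \<le> (y \<bullet> z + 1) / (norm (y, 1::real) * norm (z, 1::real))"
              unfolding c0_def
            proof (rule frac_le)
              show "0 \<le> y \<bullet> z + 1" proof -
                have "1/a < 1" using a1 by simp
                then show ?thesis using N by linarith
              qed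
              show "1 - 1 / a \<le> y \<bullet> z + 1" by (rule N)
              show "0 < norm (y, 1::real) * norm (z, 1::real)" using nE_pos[of y] nE_pos[of z] by simp
              show "norm (y, 1::real) * norm (z, 1::real) \<le> norm (y, 1::real) * sqrt (M^2 + 1)"
                using nzM nE_pos[of y] by (intro mult_left_mono) auto
            qed
            then have ge: "c1 \<le> Emb y \<bullet> Emb z" using c1 by (simp add: inner_Emb_Emb)
            have "arccos (Emb y \<bullet> Emb z) \<le> arccos c1"
              using ge c1 ib[OF Emb_sphere[of z], of y] by (intro arccos_le_arccos) auto
            then show ?thesis using z by simp
          qed
          have "pi - arccos c1 \<le> Inf (SS y)" using cInf_greatest[OF ne bound] .
          then have "pi - arccos c1 \<le> pi/2" using cwE[OF yL y1] by simp
          moreover have "arccos c1 < arccos 0" using c1 by (intro arccos_less_arccos) auto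
          ultimately show False by simp
        qed
        have "x \<bullet> x' \<ge> -1" if "x' \<in> K" for x'
        proof -
          have "y \<bullet> x' \<ge> -1" using yL that by (auto simp: L_def Lset_def)
          moreover have "x \<bullet> x' = a * (y \<bullet> x')" using a by (simp add: y_def)
          ultimately have "x \<bullet> x' \<ge> a * (-1)" using a mult_left_mono[of "-1" "y \<bullet> x'" a] by simp
          then show ?thesis using a1 by simp
        qed
        then show ?thesis by (auto simp: L_def Lset_def)
      qed
    qed
    show "self_dual \<gamma>" using sd LK KLs by blast
  qed
qed

end
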